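(* Let $P,Q\in\mathbb{P}$ and suppose $P(\omega^t)>0$ for every cylinder $\omega^t$. If $P$ merges with $Q$, then $Q\ll P$.
   Context: Let $\Omega=\{0,1\}^{\mathbb N}$ (the set of infinite $0$-$1$ sequences, called paths), with the product topology. For $\omega\in\Omega$ and $t\ge 0$, $\omega^t$ denotes the cylinder of length $t$ with base $\omega$, i.e. the set of all paths agreeing with $\omega$ in the first $t$ coordinates ($\omega^0=\Omega$). Fix a $\sigma$-algebra $\Sigma$ of subsets of $\Omega$ containing all cylinders. $\mathbb P$ denotes the set of finitely additive probability measures on $(\Omega,\Sigma)$. For $R\in\mathbb P$, $E\in\Sigma$ and a cylinder $\omega^t$ with $R(\omega^t)>0$, write $R(E\mid\omega^t)=R(E\cap\omega^t)/R(\omega^t)$. For $P,Q\in\mathbb P$, $P$ merges with $Q$ if for every $\varepsilon>0$, $\lim_{t\to\infty} Q\big(\{\omega:\sup_{E\in\Sigma}|P(E\mid\omega^t)-Q(E\mid\omega^t)|>\varepsilon\}\big)=0$ (the set is a union of cylinders of length $t$; cylinders with $Q(\omega^t)=0$ are irrelevant, and a cylinder with $Q(\omega^t)>0=P(\omega^t)$ is counted as belonging to the set). $Q$ is absolutely continuous with respect to $P$, written $Q\ll P$, if for every sequence $(E_n)$ in $\Sigma$, $P(E_n)\to 0$ implies $Q(E_n)\to 0$. *)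

theory Defs
  imports "HOL-Analysis.Analysis"
begin

type_synonym path = "nat \<Rightarrow> bool"

definition cyl :: "path \<Rightarrow> nat \<Rightarrow> path set" where
  "cyl \<omega> t = {\<eta>. \<forall>i<t. \<eta> i = \<omega> i}"

definition fa_prob :: "path set set \<Rightarrow> (path set \<Rightarrow> real) \<Rightarrow> bool" where
  "fa_prob S R \<longleftrightarrow>
     (\<forall>E\<in>S. 0 \<le> R E) \<and> R UNIV = 1 \<and>
     (\<forall>A\<in>S. \<forall>B\<in>S. A \<inter> B = {} \<longrightarrow> R (A \<union> B) = R A + R B)"

definition cond_prob :: "(path set \<Rightarrow> real) \<Rightarrow> path set \<Rightarrow> path \<Rightarrow> nat \<Rightarrow> real" where
  "cond_prob R E \<omega> t = R (E \<inter> cyl \<omega> t) / R (cyl \<omega> t)"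

text \<open>The set of paths at which P and Q are more than \<epsilon> apart at time t
  (cylinders with Q-measure 0 are excluded, cylinders with Q > 0 = P are included).
  sup_{E} |...| > \<epsilon> is written as: some E has |...| > \<epsilon>.\<close>
definition bad_set :: "path set set \<Rightarrow> (path set \<Rightarrow> real) \<Rightarrow> (path set \<Rightarrow> real) \<Rightarrow> real \<Rightarrow> nat \<Rightarrow> path set" where
  "bad_set S P Q \<epsilon> t = {\<omega>. Q (cyl \<omega> t) > 0 \<and>
      (P (cyl \<omega> t) = 0 \<or> (\<exists>E\<in>S. \<bar>cond_prob P E \<omega> t - cond_prob Q E \<omega> t\<bar> > \<epsilon>))}"

definition merges :: "path set set \<Rightarrow> (path set \<Rightarrow> real) \<Rightarrow> (path set \<Rightarrow> real) \<Rightarrow> bool" where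
  "merges S P Q \<longleftrightarrow> (\<forall>\<epsilon>>0. (\<lambda>t. Q (bad_set S P Q \<epsilon> t)) \<longlonglongrightarrow> 0)"

definition abs_cont :: "path set set \<Rightarrow> (path set \<Rightarrow> real) \<Rightarrow> (path set \<Rightarrow> real) \<Rightarrow> bool" where
  "abs_cont S Q P \<longleftrightarrow>
     (\<forall>E :: nat \<Rightarrow> path set. (\<forall>n. E n \<in> S) \<longrightarrow> (\<lambda>n. P (E n)) \<longlonglongrightarrow> 0 \<longrightarrow> (\<lambda>n. Q (E n)) \<longlonglongrightarrow> 0)"

end

theory Submission
  imports Defs
begin

definition chi :: "nat set \<Rightarrow> path" where "chi B = (\<lambda>i. i \<in> B)"

lemma fa_empty: assumes "sigma_algebra UNIV S" "fa_prob S R" shows "R {} = 0"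
proof -
  interpret sigma_algebra UNIV S by fact
  have e: "{} \<in> S" by simp
  have "R ({} \<union> {}) = R {} + R {}" using assms(2) e unfolding fa_prob_def by (metis Int_empty_left)
  then show ?thesis by simp
qed

lemma fa_finite_sum:
  assumes sa: "sigma_algebra UNIV S" and fa: "fa_prob S R" and "finite I"
    and "\<forall>i\<in>I. A i \<in> S" and "disjoint_family_on A I"
  shows "R (\<Union>i\<in>I. A i) = (\<Sum>i\<in>I. R (A i))"
  using assms(3-5)
proof (induction I rule: finite_induct)
  case empty
  then show ?case using fa_empty[OF sa fa] by simp
next
  case (insert x F)
  interpret sigma_algebra UNIV S by fact
  have d: "disjoint_family_on A F" using insert.prems
    by (meson disjoint_family_on_mono subset_insertI)
  have U: "(\<Union>i\<in>F. A i) \<in> S" using insert.prems insert.hyps by auto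
  have x: "A x \<in> S" using insert.prems by auto
  have disj: "A x \<inter> (\<Union>i\<in>F. A i) = {}"
    using insert.prems insert.hyps unfolding disjoint_family_on_def by auto
  have "R (\<Union>i\<in>insert x F. A i) = R (A x \<union> (\<Union>i\<in>F. A i))" by simp
  also have "\<dots> = R (A x) + R (\<Union>i\<in>F. A i)"
    using fa U x disj unfolding fa_prob_def by blast
  also have "\<dots> = R (A x) + (\<Sum>i\<in>F. R (A i))" using insert d by auto
  finally show ?case using insert.hyps by simp
qed

lemma fa_mono:
  assumes sa: "sigma_algebra UNIV S" and fa: "fa_prob S R" and "A \<in> S" "B \<in> S" "A \<subseteq> B"
  shows "R A \<le> R B"
proof -
  interpret sigma_algebra UNIV S by fact
  have "B - A \<in> S" using assms by auto
  moreover have "B = A \<union> (B - A)" using assms by auto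
  ultimately have "R B = R A + R (B - A)" using fa assms unfolding fa_prob_def
    by (metis Diff_disjoint)
  moreover have "R (B - A) \<ge> 0" using fa \<open>B - A \<in> S\<close> unfolding fa_prob_def by auto
  ultimately show ?thesis by simp
qed

lemma cyl_disj:
  assumes "B \<subseteq> {..<t}" "B' \<subseteq> {..<t}" "B \<noteq> B'"
  shows "cyl (chi B) t \<inter> cyl (chi B') t = {}"
proof -
  obtain i where i: "i < t" "(i \<in> B) \<noteq> (i \<in> B')" using assms by blast
  show ?thesis using i unfolding cyl_def chi_def by auto
qed

lemma cyl_cover: "\<eta> \<in> cyl (chi {i. i < t \<and> \<eta> i}) t"
  unfolding cyl_def chi_def by auto

lemma cyl_same: "\<eta> \<in> cyl \<omega> t \<Longrightarrow> cyl \<eta> t = cyl \<omega> t"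
  unfolding cyl_def by auto

lemma UNIV_cyl: "(\<Union>B\<in>Pow {..<t}. cyl (chi B) t) = UNIV"
proof (rule set_eqI)
  fix \<eta> :: path
  have "{i. i < t \<and> \<eta> i} \<in> Pow {..<t}" by auto
  then show "\<eta> \<in> (\<Union>B\<in>Pow {..<t}. cyl (chi B) t) \<longleftrightarrow> \<eta> \<in> UNIV"
    using cyl_cover[of \<eta> t] by blast
qed

lemma disj_cyl: "disjoint_family_on (\<lambda>B. cyl (chi B) t) (Pow {..<t})"
  unfolding disjoint_family_on_def
proof (intro ballI impI)
  fix B B' assume "B \<in> Pow {..<t}" "B' \<in> Pow {..<t}" "B \<noteq> B'"
  then show "cyl (chi B) t \<inter> cyl (chi B') t = {}" by (intro cyl_disj) auto
qed



lemma bad_mem: "\<omega> \<in> bad_set S P Q \<epsilon> t \<Longrightarrow> cyl \<eta> t = cyl \<omega> t \<Longrightarrow> \<eta> \<in> bad_set S P Q \<epsilon> t"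
  unfolding bad_set_def cond_prob_def by simp

lemma key_bound:
  fixes S :: "path set set" and P Q :: "path set \<Rightarrow> real"
  assumes sa: "sigma_algebra UNIV S"
    and cS: "\<And>\<omega> t. cyl \<omega> t \<in> S"
    and fP: "fa_prob S P" and fQ: "fa_prob S Q"
    and pos: "\<And>\<omega> t. P (cyl \<omega> t) > 0"
    and E: "E \<in> S" and eps: "\<epsilon> > 0"
    and m: "m > 0" "\<And>B. B \<subseteq> {..<t} \<Longrightarrow> m \<le> P (cyl (chi B) t)"
  shows "Q E \<le> Q (bad_set S P Q \<epsilon> t) + P E / m + \<epsilon>"
proof -
  interpret sigma_algebra UNIV S by fact
  define I where "I = Pow {..<t::nat}"
  define D where "D B = cyl (chi B) t" for B
  define bad where "bad = bad_set S P Q \<epsilon> t"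
  have fin: "finite I" unfolding I_def by simp
  have DS: "D B \<in> S" for B unfolding D_def by (rule cS)
  have EDS: "E \<inter> D B \<in> S" for B using E DS by auto
  have disjD: "disjoint_family_on D I" unfolding D_def I_def by (rule disj_cyl)
  have disjED: "disjoint_family_on (\<lambda>B. E \<inter> D B) I"
    using disjD unfolding disjoint_family_on_def by blast
  have UD: "(\<Union>B\<in>I. D B) = UNIV" unfolding D_def I_def by (rule UNIV_cyl)
  have UED: "(\<Union>B\<in>I. E \<inter> D B) = E" using UD by blast
  have sumQE: "Q E = (\<Sum>B\<in>I. Q (E \<inter> D B))"
    using fa_finite_sum[OF sa fQ fin, of "\<lambda>B. E \<inter> D B"] EDS disjED UED by simp
  have sumPE: "P E = (\<Sum>B\<in>I. P (E \<inter> D B))"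
    using fa_finite_sum[OF sa fP fin, of "\<lambda>B. E \<inter> D B"] EDS disjED UED by simp
  have sumQ1: "(\<Sum>B\<in>I. Q (D B)) = 1"
    using fa_finite_sum[OF sa fQ fin, of D] DS disjD UD fQ unfolding fa_prob_def by simp
  define I' where "I' = {B\<in>I. chi B \<in> bad}"
  have badU: "bad = (\<Union>B\<in>I'. D B)"
  proof
    show "bad \<subseteq> (\<Union>B\<in>I'. D B)"
    proof
      fix \<eta> assume h: "\<eta> \<in> bad"
      define B where "B = {i. i < t \<and> \<eta> i}"
      have "\<eta> \<in> D B" unfolding D_def B_def by (rule cyl_cover)
      then have "cyl (chi B) t = cyl \<eta> t" unfolding D_def using cyl_same by metis
      then have "chi B \<in> bad" using h bad_mem unfolding bad_def by metis
      moreover have "B \<in> I" unfolding I_def B_def by auto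
      ultimately show "\<eta> \<in> (\<Union>B\<in>I'. D B)" using \<open>\<eta> \<in> D B\<close> unfolding I'_def by blast
    qed
  next
    show "(\<Union>B\<in>I'. D B) \<subseteq> bad"
    proof
      fix \<eta> assume "\<eta> \<in> (\<Union>B\<in>I'. D B)"
      then obtain B where B: "B \<in> I'" "\<eta> \<in> D B" by blast
      then have "cyl \<eta> t = cyl (chi B) t" unfolding D_def using cyl_same by metis
      then show "\<eta> \<in> bad" using B bad_mem unfolding bad_def I'_def by blast
    qed
  qed
  have finI': "finite I'" using fin unfolding I'_def by simp
  have "Q bad = (\<Sum>B\<in>I'. Q (D B))"
    unfolding badU by (rule fa_finite_sum[OF sa fQ finI']) (use DS disjD in \<open>auto simp: I'_def intro: disjoint_family_on_mono\<close>)
  also have "\<dots> = (\<Sum>B\<in>I. if chi B \<in> bad then Q (D B) else 0)"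
    unfolding I'_def using fin by (simp add: sum.inter_filter)
  finally have sumbad: "Q bad = (\<Sum>B\<in>I. if chi B \<in> bad then Q (D B) else 0)" .
  have tb: "Q (E \<inter> D B) \<le> (if chi B \<in> bad then Q (D B) else 0) + P (E \<inter> D B) / m + \<epsilon> * Q (D B)"
    if "B \<in> I" for B
  proof -
    have Bt: "B \<subseteq> {..<t}" using that unfolding I_def by auto
    have q0: "0 \<le> Q (E \<inter> D B)" using fQ EDS unfolding fa_prob_def by auto
    have qD0: "0 \<le> Q (D B)" using fQ DS unfolding fa_prob_def by auto
    have p0: "0 \<le> P (E \<inter> D B)" using fP EDS unfolding fa_prob_def by auto
    have qle: "Q (E \<inter> D B) \<le> Q (D B)" using fa_mono[OF sa fQ EDS DS] by auto
    have qD1: "Q (D B) \<le> 1" using fa_mono[OF sa fQ DS, of UNIV] fQ unfolding fa_prob_def by auto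
    have mD: "m \<le> P (D B)" using m(2)[OF Bt] unfolding D_def .
    have PD: "P (D B) > 0" unfolding D_def by (rule pos)
    have t2: "0 \<le> P (E \<inter> D B) / m" using p0 m by simp
    have t3: "0 \<le> \<epsilon> * Q (D B)" using eps qD0 by simp
    show ?thesis
    proof (cases "chi B \<in> bad")
      case True then show ?thesis using qle t2 t3 by simp
    next
      case nb: False
      show ?thesis
      proof (cases "Q (D B) = 0")
        case True then show ?thesis using qle q0 t2 t3 nb by simp
      next
        case False
        then have QDp: "Q (D B) > 0" using qD0 by simp
        have "\<bar>cond_prob P E (chi B) t - cond_prob Q E (chi B) t\<bar> \<le> \<epsilon>"
          using nb QDp E unfolding bad_def bad_set_def D_def by (auto simp: not_less)
        then have "Q (E \<inter> D B) / Q (D B) \<le> P (E \<inter> D B) / P (D B) + \<epsilon>"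
          unfolding cond_prob_def D_def by linarith
        then have "Q (E \<inter> D B) \<le> Q (D B) * (P (E \<inter> D B) / P (D B)) + \<epsilon> * Q (D B)"
          using QDp by (simp add: divide_le_eq algebra_simps)
        also have "Q (D B) * (P (E \<inter> D B) / P (D B)) \<le> P (E \<inter> D B) / P (D B)"
          using mult_left_le_one_le[OF divide_nonneg_pos[OF p0 PD] qD0 qD1] .
        also have "P (E \<inter> D B) / P (D B) \<le> P (E \<inter> D B) / m"
          using p0 mD m(1) by (simp add: divide_left_mono)
        finally show ?thesis using nb by simp
      qed
    qed
  qed
  have "Q E \<le> (\<Sum>B\<in>I. (if chi B \<in> bad then Q (D B) else 0) + P (E \<inter> D B) / m + \<epsilon> * Q (D B))"
    unfolding sumQE by (rule sum_mono) (rule tb)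
  also have "\<dots> = Q bad + P E / m + \<epsilon>"
    by (simp add: sum.distrib sumbad sumPE sum_divide_distrib[symmetric] sum_distrib_left[symmetric] sumQ1)
  finally show ?thesis unfolding bad_def .
qed

theorem proposition1:
  fixes S :: "path set set" and P Q :: "path set \<Rightarrow> real"
  assumes "sigma_algebra UNIV S"
    and "\<And>\<omega> t. cyl \<omega> t \<in> S"
    and "fa_prob S P" and "fa_prob S Q"
    and "\<And>\<omega> t. P (cyl \<omega> t) > 0"
    and "merges S P Q"
  shows "abs_cont S Q P"
proof -
  have merg: "\<And>\<epsilon>. \<epsilon> > 0 \<Longrightarrow> (\<lambda>t. Q (bad_set S P Q \<epsilon> t)) \<longlonglongrightarrow> 0"
    using assms(6) unfolding merges_def by blast
  show ?thesis unfolding abs_cont_def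
  proof (intro allI impI)
    fix E :: "nat \<Rightarrow> path set"
    assume ES: "\<forall>n. E n \<in> S" and PE: "(\<lambda>n. P (E n)) \<longlonglongrightarrow> 0"
    show "(\<lambda>n. Q (E n)) \<longlonglongrightarrow> 0"
    proof (rule LIMSEQ_I)
      fix r :: real assume r: "0 < r"
      define \<epsilon> where "\<epsilon> = r / 4"
      have eps: "\<epsilon> > 0" using r unfolding \<epsilon>_def by simp
      obtain t where t: "\<forall>n\<ge>t. norm (Q (bad_set S P Q \<epsilon> n) - 0) < \<epsilon>"
        using LIMSEQ_D[OF merg[OF eps] eps] by blast
      then have qb: "Q (bad_set S P Q \<epsilon> t) < \<epsilon>" by auto
      define m where "m = Min ((\<lambda>B. P (cyl (chi B) t)) ` Pow {..<t})"
      have m0: "m > 0" unfolding m_def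
        by (subst Min_gr_iff) (use assms(5) in auto)
      have mle: "\<And>B. B \<subseteq> {..<t} \<Longrightarrow> m \<le> P (cyl (chi B) t)"
        unfolding m_def by (rule Min_le) auto
      have me: "m * \<epsilon> > 0" using m0 eps by simp
      obtain N where N: "\<forall>n\<ge>N. norm (P (E n) - 0) < m * \<epsilon>"
        using LIMSEQ_D[OF PE me] by blast
      show "\<exists>no. \<forall>n\<ge>no. norm (Q (E n) - 0) < r"
      proof (intro exI allI impI)
        fix n assume n: "N \<le> n"
        have "P (E n) < m * \<epsilon>" using N n by auto
        then have pm: "P (E n) / m < \<epsilon>" using m0 by (simp add: divide_less_eq mult.commute)
        have kb: "Q (E n) \<le> Q (bad_set S P Q \<epsilon> t) + P (E n) / m + \<epsilon>"
          by (rule key_bound[OF assms(1) assms(2) assms(3) assms(4) assms(5) _ eps m0 mle])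
             (use ES in auto)
        have q0: "Q (E n) \<ge> 0" using assms(4) ES unfolding fa_prob_def by auto
        have e3: "3 * \<epsilon> < r" using r unfolding \<epsilon>_def by simp
        have "Q (E n) < r" using kb qb pm e3 by linarith
        then have "\<bar>Q (E n)\<bar> < r" using q0 by (simp only: abs_of_nonneg)
        then show "norm (Q (E n) - 0) < r" by (simp only: diff_zero real_norm_def)
      qed
    qed
  qed
qed

end
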